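(* Let $n,d$ be positive integers and let $\vec{G}$ be a digraph of order $n$ with minimum outdegree $\delta^+(\vec{G})\ge d$. Then $\vec{G}$ contains a subdigraph $\vec{H}$ such that (i) $\delta^+(\vec{H})> d/2$; (ii) $\kappa_{\vec{H}}(x,y)\ge d^2/(4n)$ for all pairs of vertices $x,y\in V(\vec{H})$ with $d^-_{\vec{H}}(y)\ge d/2$; (iii) at least $d^2/(4n)$ vertices of $\vec{H}$ have indegree at least $d/2$ in $\vec{H}$.
   Context: Digraphs have no loops, and for any ordered pair of vertices $x,y$ there is at most one edge directed from $x$ to $y$ (there may also be an edge from $y$ to $x$). $\delta^+(\vec{G})$ denotes the minimum outdegree of $\vec{G}$ and $d^-_{\vec{H}}(y)$ the indegree of $y$ in $\vec{H}$. For vertices $x,y$ of a digraph $\vec{G}$, $\kappa_{\vec{G}}(x,y)$ is defined as the largest integer $k$ with $1\le k\le |\vec{G}|-2$ such that for every vertex set $S\subseteq V(\vec{G})\setminus\{x,y\}$ with $|S|<k$, the digraph $\vec{G}-S$ contains a directed path from $x$ to $y$; and $\kappa_{\vec{G}}(x,y):=0$ if $\vec{G}$ contains no directed path from $x$ to $y$. *)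

theory Defs
  imports Complex_Main
begin

definition digraph :: "'a set \<Rightarrow> ('a \<times> 'a) set \<Rightarrow> bool" where
  "digraph V E \<longleftrightarrow> finite V \<and> E \<subseteq> V \<times> V \<and> (\<forall>v. (v, v) \<notin> E)"

definition subdigraph :: "'a set \<Rightarrow> ('a \<times> 'a) set \<Rightarrow> 'a set \<Rightarrow> ('a \<times> 'a) set \<Rightarrow> bool" where
  "subdigraph VH EH V E \<longleftrightarrow> digraph VH EH \<and> VH \<subseteq> V \<and> EH \<subseteq> E"

definition outdeg :: "('a \<times> 'a) set \<Rightarrow> 'a \<Rightarrow> nat" where
  "outdeg E v = card {w. (v, w) \<in> E}"

definition indeg :: "('a \<times> 'a) set \<Rightarrow> 'a \<Rightarrow> nat" where
  "indeg E v = card {u. (u, v) \<in> E}"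

definition min_outdeg :: "'a set \<Rightarrow> ('a \<times> 'a) set \<Rightarrow> nat" where
  "min_outdeg V E = Min (outdeg E ` V)"

definition has_path_avoiding :: "'a set \<Rightarrow> ('a \<times> 'a) set \<Rightarrow> 'a set \<Rightarrow> 'a \<Rightarrow> 'a \<Rightarrow> bool" where
  "has_path_avoiding V E S x y \<longleftrightarrow>
     x \<in> V - S \<and> y \<in> V - S \<and> (x, y) \<in> (E \<inter> ((V - S) \<times> (V - S)))\<^sup>*"

text \<open>Local connectivity kappa(x,y). The upper bound |V|-2 is replaced by max 1 (|V|-2)
  so that the maximum is well defined for digraphs of order at most 2.\<close>
definition kappa :: "'a set \<Rightarrow> ('a \<times> 'a) set \<Rightarrow> 'a \<Rightarrow> 'a \<Rightarrow> nat" where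
  "kappa V E x y =
     (if \<not> has_path_avoiding V E {} x y then 0
      else Max {k. 1 \<le> k \<and> k \<le> max 1 (card V - 2) \<and>
                   (\<forall>S. S \<subseteq> V - {x, y} \<and> card S < k \<longrightarrow> has_path_avoiding V E S x y)})"

end

theory Submission
  imports Defs
begin

lemma sum_indeg_card:
  assumes "finite W" "F \<subseteq> W \<times> W"
  shows "(\<Sum>v\<in>W. indeg F v) = card F"
proof -
  define G where "G = (SIGMA v:W. {u. (u, v) \<in> F})"
  have GF: "G = F\<inverse>" using assms(2) unfolding G_def by auto
  have fin: "\<forall>v\<in>W. finite {u. (u, v) \<in> F}"
    using assms by (auto intro: finite_subset[of _ W])
  have "card G = (\<Sum>v\<in>W. card {u. (u, v) \<in> F})" unfolding G_def
    by (rule card_SigmaI[OF assms(1) fin])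
  then show ?thesis using GF unfolding indeg_def by simp
qed

lemma sum_outdeg_card:
  assumes "finite W" "F \<subseteq> W \<times> W"
  shows "(\<Sum>v\<in>W. outdeg F v) = card F"
proof -
  define G where "G = (SIGMA v:W. {u. (v, u) \<in> F})"
  have GF: "G = F" using assms(2) unfolding G_def by auto
  have fin: "\<forall>v\<in>W. finite {u. (v, u) \<in> F}"
    using assms by (auto intro: finite_subset[of _ W])
  have "card G = (\<Sum>v\<in>W. card {u. (v, u) \<in> F})" unfolding G_def
    by (rule card_SigmaI[OF assms(1) fin])
  then show ?thesis using GF unfolding outdeg_def by simp
qed

theorem lemma4:
  fixes V :: "'a set" and E :: "('a \<times> 'a) set" and n d :: nat
  assumes "n > 0" and "d > 0"
    and "digraph V E" and "card V = n"
    and "min_outdeg V E \<ge> d"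
  shows "\<exists>VH EH. subdigraph VH EH V E \<and> VH \<noteq> {} \<and>
           real (min_outdeg VH EH) > real d / 2 \<and>
           (\<forall>x\<in>VH. \<forall>y\<in>VH. real (indeg EH y) \<ge> real d / 2 \<longrightarrow>
               real (kappa VH EH x y) \<ge> (real d)\<^sup>2 / (4 * real n)) \<and>
           real (card {v\<in>VH. real (indeg EH v) \<ge> real d / 2}) \<ge> (real d)\<^sup>2 / (4 * real n)"
proof -
  have finV: "finite V" and EV: "E \<subseteq> V \<times> V" and noloop: "\<And>v. (v, v) \<notin> E"
    using assms(3) unfolding digraph_def by auto
  have Vne: "V \<noteq> {}" using assms(1,4) by auto
  have outV: "\<And>v. v \<in> V \<Longrightarrow> d \<le> outdeg E v"
  proof -
    fix v assume "v \<in> V"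
    then have "min_outdeg V E \<le> outdeg E v" unfolding min_outdeg_def using finV by simp
    then show "d \<le> outdeg E v" using assms(5) by simp
  qed
  have outle_gen: "outdeg (E \<inter> W \<times> W) v \<le> card W - 1" if "W \<subseteq> V" "v \<in> W" for W v
  proof -
    have "{w. (v, w) \<in> E \<inter> W \<times> W} \<subseteq> W - {v}" using noloop by auto
    moreover have "finite W" using that finV finite_subset by blast
    ultimately show ?thesis unfolding outdeg_def
      by (metis card_Diff_singleton card_mono finite_Diff that(2))
  qed
  have EVV: "E \<inter> V \<times> V = E" using EV by auto
  have dn: "d < n"
  proof -
    obtain v where "v \<in> V" using Vne by auto
    then show ?thesis using outV[of v] outle_gen[of V v] EVV assms(1,4) by auto
  qed
  define c where "c = real d / (2 * real n)"
  define k where "k = (real d)\<^sup>2 / (4 * real n)"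
  have cpos: "c > 0" using assms(1,2) unfolding c_def by simp
  have kpos: "k > 0" using assms(1,2) unfolding k_def by simp
  have ck: "c * (real d / 2) = k" unfolding c_def k_def by (simp add: power2_eq_square)
  define Q where "Q W \<longleftrightarrow> W \<subseteq> V \<and> W \<noteq> {} \<and>
      (\<forall>v\<in>W. real (outdeg (E \<inter> W \<times> W) v) \<ge> real d / 2 + c * real (card W))" for W
  have "Q V"
  proof -
    have "real d / 2 + c * real (card V) = real d" using assms(1,4) unfolding c_def by simp
    then show ?thesis unfolding Q_def using Vne EVV outV by auto
  qed
  then obtain W where QW: "Q W" and minW: "\<And>W'. Q W' \<Longrightarrow> card W \<le> card W'"
    using ex_has_least_nat[of Q V card] by blast
  define F where "F = E \<inter> W \<times> W"
  have WV: "W \<subseteq> V" and Wne: "W \<noteq> {}"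
    and out: "\<And>v. v \<in> W \<Longrightarrow> real (outdeg F v) \<ge> real d / 2 + c * real (card W)"
    using QW unfolding Q_def F_def by auto
  have finW: "finite W" using WV finV finite_subset by blast
  have FW: "F \<subseteq> W \<times> W" and FE: "F \<subseteq> E" unfolding F_def by auto
  have dig: "digraph W F" unfolding digraph_def using finW FW FE noloop by auto
  have hgt: "real (card W) > real d / 2 + 1"
  proof -
    obtain v where v: "v \<in> W" using Wne by auto
    have "outdeg F v \<le> card W - 1" using outle_gen[OF WV v] unfolding F_def .
    moreover have "card W \<ge> 1" using finW Wne by (simp add: Suc_leI card_gt_0_iff)
    ultimately have "real (outdeg F v) \<le> real (card W) - 1" by linarith
    moreover have "c * real (card W) > 0" using cpos \<open>card W \<ge> 1\<close> by simp
    ultimately show ?thesis using out[OF v] by linarith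
  qed
  have noSep: "has_path_avoiding W F S x y"
    if xW: "x \<in> W" and yW: "y \<in> W" and iy: "real (indeg F y) \<ge> real d / 2"
      and SW: "S \<subseteq> W - {x, y}" and Sk: "real (card S) < k" for x y S
  proof (rule ccontr)
    assume np: "\<not> has_path_avoiding W F S x y"
    define R where "R = F \<inter> ((W - S) \<times> (W - S))"
    define A where "A = {v. (x, v) \<in> R\<^sup>*}"
    have xy: "x \<in> W - S" "y \<in> W - S" using xW yW SW by auto
    have yA: "y \<notin> A" using np xy unfolding A_def R_def has_path_avoiding_def by auto
    have xA: "x \<in> A" unfolding A_def by simp
    have AWS: "A \<subseteq> W - S"
    proof
      fix v assume "v \<in> A"
      then have "(x, v) \<in> R\<^sup>*" unfolding A_def by simp
      then show "v \<in> W - S" using xy(1) by (cases rule: rtranclE) (auto simp: R_def)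
    qed
    have finS: "finite S" using SW finW finite_subset by blast
    have finA: "finite A" using AWS finW finite_subset by blast
    have closed: "{w. (v, w) \<in> F} \<subseteq> {w. (v, w) \<in> E \<inter> A \<times> A} \<union> S" if vA: "v \<in> A" for v
    proof
      fix w assume w: "w \<in> {w. (v, w) \<in> F}"
      show "w \<in> {w. (v, w) \<in> E \<inter> A \<times> A} \<union> S"
      proof (cases "w \<in> S")
        case False
        then have "(v, w) \<in> R" using w AWS vA FW unfolding R_def by auto
        then have "w \<in> A" using vA unfolding A_def by (simp add: rtrancl_into_rtrancl)
        then show ?thesis using w vA FE by auto
      qed simp
    qed
    have outA: "real (outdeg (E \<inter> A \<times> A) v) \<ge> real (outdeg F v) - real (card S)" if vA: "v \<in> A" for v
    proof -
      have "finite {w. (v, w) \<in> E \<inter> A \<times> A}" using finA by (auto intro: finite_subset[of _ A])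
      then have "outdeg F v \<le> card ({w. (v, w) \<in> E \<inter> A \<times> A} \<union> S)"
        unfolding outdeg_def using closed[OF vA] finS by (simp add: card_mono)
      also have "\<dots> \<le> outdeg (E \<inter> A \<times> A) v + card S" unfolding outdeg_def by (rule card_Un_le)
      finally show ?thesis by simp
    qed
    have inA: "{u. (u, y) \<in> F} \<union> {y} \<subseteq> W - A"
    proof
      fix u assume u: "u \<in> {u. (u, y) \<in> F} \<union> {y}"
      show "u \<in> W - A"
      proof (cases "u = y")
        case False
        then have uy: "(u, y) \<in> F" using u by auto
        have "u \<notin> A"
        proof
          assume uA: "u \<in> A"
          then have "(u, y) \<in> R" using uy AWS xy unfolding R_def by auto
          then have "y \<in> A" using uA unfolding A_def by (simp add: rtrancl_into_rtrancl)
          then show False using yA by simp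
        qed
        then show ?thesis using uy FW by auto
      qed (use yW yA in auto)
    qed
    have "y \<notin> {u. (u, y) \<in> F}" using FE noloop by auto
    then have "card ({u. (u, y) \<in> F} \<union> {y}) = indeg F y + 1"
      unfolding indeg_def using finW FW
      by (metis (no_types, lifting) Un_insert_right card_insert_disjoint finite_Diff
          finite_subset inA sup_bot.right_neutral Suc_eq_plus1 insert_subset)
    moreover have "card ({u. (u, y) \<in> F} \<union> {y}) \<le> card (W - A)"
      using inA finW by (simp add: card_mono)
    moreover have "card (W - A) = card W - card A" using AWS finA by (simp add: card_Diff_subset subset_iff)
    moreover have "card A \<le> card W" using AWS finW by (meson Diff_subset card_mono subset_trans)
    ultimately have cardA: "real (card A) + real (indeg F y) + 1 \<le> real (card W)" by linarith
    have "Q A"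
    proof -
      have "A \<subseteq> V" using AWS WV by auto
      moreover have "A \<noteq> {}" using xA by auto
      moreover have "real (outdeg (E \<inter> A \<times> A) v) \<ge> real d / 2 + c * real (card A)" if vA: "v \<in> A" for v
      proof -
        have vW: "v \<in> W" using vA AWS by auto
        have "c * real (card W) \<ge> c * (real (card A) + real d / 2 + 1)"
          using cardA iy cpos by (intro mult_left_mono) auto
        then have "c * real (card W) \<ge> c * real (card A) + k + c"
          using ck by (simp add: algebra_simps)
        then show ?thesis using outA[OF vA] out[OF vW] Sk cpos by linarith
      qed
      ultimately show ?thesis unfolding Q_def by auto
    qed
    moreover have "card A < card W" using AWS finW yA yW
      by (metis Diff_subset psubsetI psubset_card_mono subset_trans)
    ultimately show False using minW by fastforce
  qed
  define M where "M = {v\<in>W. real (indeg F v) \<ge> real d / 2}"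
  have part3: "real (card M) \<ge> k"
  proof -
    have finM: "finite M" using finW unfolding M_def by simp
    have MW: "M \<subseteq> W" unfolding M_def by auto
    have "real (card W) * (real d / 2 + c * real (card W)) \<le> (\<Sum>v\<in>W. real (outdeg F v))"
      using sum_mono[of W "\<lambda>_. real d / 2 + c * real (card W)" "\<lambda>v. real (outdeg F v)"] out
      by simp
    also have "\<dots> = real (card F)" using sum_outdeg_card[OF finW FW] by (metis of_nat_sum)
    also have "\<dots> = (\<Sum>v\<in>W. real (indeg F v))" using sum_indeg_card[OF finW FW] by (metis of_nat_sum)
    also have "\<dots> = (\<Sum>v\<in>M. real (indeg F v)) + (\<Sum>v\<in>W - M. real (indeg F v))"
      using finW MW by (metis sum.subset_diff add.commute)
    also have "\<dots> \<le> real (card M) * real (card W) + real (card (W - M)) * (real d / 2)"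
    proof (rule add_mono)
      have "\<And>v. v \<in> M \<Longrightarrow> real (indeg F v) \<le> real (card W)"
      proof -
        fix v assume "v \<in> M"
        have "{u. (u, v) \<in> F} \<subseteq> W" using FW by auto
        then show "real (indeg F v) \<le> real (card W)" unfolding indeg_def using finW
          by (simp add: card_mono)
      qed
      then show "(\<Sum>v\<in>M. real (indeg F v)) \<le> real (card M) * real (card W)"
        using sum_bounded_above[of M "\<lambda>v. real (indeg F v)" "real (card W)"] by simp
      have "\<And>v. v \<in> W - M \<Longrightarrow> real (indeg F v) \<le> real d / 2" unfolding M_def by auto
      then show "(\<Sum>v\<in>W - M. real (indeg F v)) \<le> real (card (W - M)) * (real d / 2)"
        using sum_bounded_above[of "W - M" "\<lambda>v. real (indeg F v)" "real d / 2"] by simp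
    qed
    also have "\<dots> \<le> real (card M) * real (card W) + real (card W) * (real d / 2)"
      using card_mono[OF finW, of "W - M"] by (simp add: mult_right_mono)
    finally have "c * real (card W) * real (card W) \<le> real (card M) * real (card W)"
      by (simp add: algebra_simps)
    then have "c * real (card W) \<le> real (card M)" using hgt
      by (metis mult_le_cancel_right_pos add_pos_pos div_0 linorder_not_le nle_le of_nat_0_less_iff
          zero_less_one card_gt_0_iff finW Wne)
    moreover have "c * real (card W) \<ge> c * (real d / 2)" using hgt cpos by simp
    ultimately show ?thesis using ck by linarith
  qed
  have part1: "real (min_outdeg W F) > real d / 2"
  proof -
    have "min_outdeg W F \<in> outdeg F ` W" unfolding min_outdeg_def using finW Wne by simp
    then obtain v where "v \<in> W" "min_outdeg W F = outdeg F v" by auto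
    then show ?thesis using out[of v] cpos Wne finW
      by (smt (verit) card_gt_0_iff mult_pos_pos of_nat_0_less_iff)
  qed
  have part2: "real (kappa W F x y) \<ge> k"
    if xW: "x \<in> W" and yW: "y \<in> W" and iy: "real (indeg F y) \<ge> real d / 2" for x y
  proof -
    define K where "K = nat \<lceil>k\<rceil>"
    define T where "T = {j. 1 \<le> j \<and> j \<le> max 1 (card W - 2) \<and>
                   (\<forall>S. S \<subseteq> W - {x, y} \<and> card S < j \<longrightarrow> has_path_avoiding W F S x y)}"
    have hp: "has_path_avoiding W F {} x y" using noSep[OF xW yW iy, of "{}"] kpos by simp
    have Kk: "real K \<ge> k" unfolding K_def by linarith
    have K1: "1 \<le> K" unfolding K_def using kpos by linarith
    have Kmax: "K \<le> max 1 (card W - 2)"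
    proof (cases "k \<le> 1")
      case True
      then have "K \<le> 1" unfolding K_def by linarith
      then show ?thesis by simp
    next
      case False
      have dn': "real d < real n" using dn by simp
      have "real d * real d > 4 * real n" using False assms(1) unfolding k_def
        by (simp add: power2_eq_square field_simps)
      then have "4 * real d < real d * real d" using dn' by linarith
      then have d4: "real d > 4" using assms(2) by (simp add: mult_less_cancel_right_pos)
      have "k < real d / 4"
      proof -
        have "real d * real d < real d * real n" using dn' assms(2) by simp
        then show ?thesis unfolding k_def using assms(1) by (simp add: power2_eq_square field_simps)
      qed
      then have "k \<le> real (card W) - 2" using hgt d4 by linarith
      then have "k \<le> real (card W - 2)" using hgt by linarith
      then have "K \<le> card W - 2" unfolding K_def by (simp add: ceiling_le_iff nat_le_iff)
      then show ?thesis by simp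
    qed
    have KT: "K \<in> T"
    proof -
      have "has_path_avoiding W F S x y" if "S \<subseteq> W - {x, y}" "card S < K" for S
      proof -
        have "real (card S) < k" using that(2) unfolding K_def
          by (metis less_ceiling_iff of_int_of_nat_eq zless_nat_eq_int_zless)
        then show ?thesis using noSep[OF xW yW iy that(1)] by simp
      qed
      then show ?thesis unfolding T_def using K1 Kmax by auto
    qed
    have "finite T" unfolding T_def by (rule finite_subset[of _ "{..max 1 (card W - 2)}"]) auto
    then have "K \<le> Max T" using KT by simp
    moreover have "kappa W F x y = Max T" unfolding kappa_def T_def using hp by simp
    ultimately show ?thesis using Kk by simp
  qed
  have sub: "subdigraph W F V E" unfolding subdigraph_def using dig WV FE by blast
  have p2: "\<forall>x\<in>W. \<forall>y\<in>W. real (indeg F y) \<ge> real d / 2 \<longrightarrow>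
               real (kappa W F x y) \<ge> (real d)\<^sup>2 / (4 * real n)"
    using part2 unfolding k_def by blast
  have p3: "real (card {v\<in>W. real (indeg F v) \<ge> real d / 2}) \<ge> (real d)\<^sup>2 / (4 * real n)"
    using part3 unfolding M_def k_def .
  show ?thesis using sub Wne part1 p2 p3 by blast
qed

end
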